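(* Let $X\subset\mathbb{R}^n$ be bounded, let $X_I, X_U\subset X$ with $X_I\cap X_U=\emptyset$. Let $f\colon X\to\mathbb{R}^n$ define the dynamics $x(k+1)=f(x(k))$ (assumed to have unique solutions). Fix $T\in\mathbb{N}_+$ and let $\Xi$ be the set of all trajectories $\xi=\{x(k)\}_{k=0}^T$ consistent with these dynamics and with $x(0)\in X_I$. Let $V\colon\mathbb{R}^n\to\mathbb{R}$ be continuous and suppose that (i) $V(x)\le 0$ for all $x\in X_I$; (ii) $V(x)>0$ for all $x\in X_U$; (iii) for every trajectory $\xi=\{x(k)\}_{k=0}^T\in\Xi$, $$V(x(k+1))-V(x(k))<\frac1T\Big(\inf_{x\in X_U}V(x)-\sup_{x\in X_I}V(x)\Big),\qquad k=0,\dots,T-1.$$ Then $V$ is a safety (barrier) certificate: for every $\xi\in\Xi$ and every $k\in\{0,\dots,T\}$, $x(k)\notin X_U$.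
   Context: Trajectories are finite sequences of states generated by the deterministic discrete-time dynamics from an initial state in $X_I$. *)

theory Defs
  imports "HOL-Analysis.Analysis"
begin

text \<open>A trajectory is represented as a function on nat; only indices 0..T matter.\<close>
definition trajectories ::
  "('a \<Rightarrow> 'a) \<Rightarrow> 'a set \<Rightarrow> 'a set \<Rightarrow> nat \<Rightarrow> (nat \<Rightarrow> 'a) set" where
  "trajectories f X XI T =
     {\<xi>. \<xi> 0 \<in> XI \<and> (\<forall>k\<le>T. \<xi> k \<in> X) \<and> (\<forall>k<T. \<xi> (Suc k) = f (\<xi> k))}"

end

theory Submission
  imports Defs
begin

theorem proposition2:
  fixes X XI XU :: "(real ^ 'n) set"
    and f :: "real ^ 'n \<Rightarrow> real ^ 'n"
    and V :: "real ^ 'n \<Rightarrow> real"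
    and T :: nat
  assumes "bounded X"
    and "XI \<subseteq> X" and "XU \<subseteq> X" and "XI \<inter> XU = {}"
    and "T > 0"
    and "continuous_on UNIV V"
    and "\<And>x. x \<in> XI \<Longrightarrow> V x \<le> 0"
    and "\<And>x. x \<in> XU \<Longrightarrow> V x > 0"
    and "\<And>\<xi> k. \<xi> \<in> trajectories f X XI T \<Longrightarrow> k < T \<Longrightarrow>
           V (\<xi> (Suc k)) - V (\<xi> k) < (1 / real T) * (Inf (V ` XU) - Sup (V ` XI))"
  shows "\<forall>\<xi> \<in> trajectories f X XI T. \<forall>k\<le>T. \<xi> k \<notin> XU"
proof (intro ballI allI impI)
  fix \<xi> k assume tr: "\<xi> \<in> trajectories f X XI T" and kT: "k \<le> T"
  show "\<xi> k \<notin> XU"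
  proof
    assume U: "\<xi> k \<in> XU"
    have I: "\<xi> 0 \<in> XI" using tr by (simp add: trajectories_def)
    have "compact (closure X)" using assms(1) by (simp add: compact_closure)
    moreover have "continuous_on (closure X) V" using assms(6) continuous_on_subset by blast
    ultimately have "compact (V ` closure X)" using compact_continuous_image by blast
    hence bX: "bounded (V ` closure X)" by (rule compact_imp_bounded)
    have "bounded (V ` XU)" using bX assms(3) closure_subset
      by (meson bounded_subset image_mono subset_trans)
    hence bU: "bdd_below (V ` XU)" by (rule bounded_imp_bdd_below)
    have "bounded (V ` XI)" using bX assms(2) closure_subset
      by (meson bounded_subset image_mono subset_trans)
    hence bI: "bdd_above (V ` XI)" by (rule bounded_imp_bdd_above)
    have infU: "Inf (V ` XU) \<le> V (\<xi> k)" using U bU by (simp add: cInf_lower)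
    have supI: "V (\<xi> 0) \<le> Sup (V ` XI)" using I bI by (simp add: cSup_upper)
    define D where "D = Inf (V ` XU) - Sup (V ` XI)"
    have step: "\<And>j. j < T \<Longrightarrow> V (\<xi> (Suc j)) - V (\<xi> j) < D / real T"
      using assms(9)[OF tr] unfolding D_def by simp
    have tele: "j \<le> T \<Longrightarrow> 0 < j \<Longrightarrow> V (\<xi> j) - V (\<xi> 0) < real j * (D / real T)" for j
    proof (induction j)
      case 0 then show ?case by simp
    next
      case (Suc j)
      have s: "V (\<xi> (Suc j)) - V (\<xi> j) < D / real T" using Suc.prems step by simp
      show ?case
      proof (cases "j = 0")
        case True then show ?thesis using s by simp
      next
        case False
        then have "V (\<xi> j) - V (\<xi> 0) < real j * (D / real T)" using Suc by simp
        moreover have "real (Suc j) * (D / real T) = real j * (D / real T) + D / real T" by (simp add: distrib_right add_divide_distrib)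
        ultimately show ?thesis using s by linarith
      qed
    qed
    have k0: "k \<noteq> 0" using U I assms(4) by auto
    have tk: "V (\<xi> k) - V (\<xi> 0) < real k * (D / real T)" using tele kT k0 by simp
    show False
    proof (cases "D \<ge> 0")
      case True
      have "real k * (D / real T) \<le> real T * (D / real T)"
        using kT True by (intro mult_right_mono) (auto simp: divide_nonneg_pos)
      also have "\<dots> = D" using assms(5) by simp
      finally show False using tk infU supI unfolding D_def by linarith
    next
      case False
      have "real k * (D / real T) \<le> 0" using False assms(5)
        by (intro mult_nonneg_nonpos) (auto simp: divide_nonpos_pos)
      then show False using tk assms(7)[OF I] assms(8)[OF U] by linarith
    qed
  qed
qed

end
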